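(* Let $G$ be a graph of order at least $3$ and maximum degree at most $3$. If $S\subseteq V(G)$ is such that $w_{(G,S)}(u)\geq 3$ for every $u\in V(G)\setminus S$, then $|S|\geq\frac{1}{4}(n(G)+6)$.
   Context: All graphs are finite, simple and undirected; $n(G)=|V(G)|$. For a graph $G$, a set $S\subseteq V(G)$, and vertices $u,v$ with $u\in S$ or $v\in S$, ${\rm dist}_{(G,S)}(u,v)$ is the minimum number of edges of a path $P$ in $G$ between $u$ and $v$ such that $S$ contains exactly one endvertex of $P$ and no internal vertex of $P$, and $\infty$ if no such path exists (so ${\rm dist}_{(G,S)}(u,u)=0$ for $u\in S$, and $\infty$ for distinct $u,v\in S$). For $u\in V(G)$, $w_{(G,S)}(u)=\sum_{v\in S}(1/2)^{{\rm dist}_{(G,S)}(u,v)-1}$ with $(1/2)^{\infty}=0$. *)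

theory Defs
  imports Complex_Main
begin

definition simple_graph :: "'a set \<Rightarrow> ('a \<Rightarrow> 'a \<Rightarrow> bool) \<Rightarrow> bool" where
  "simple_graph V E \<longleftrightarrow> finite V \<and> (\<forall>x y. E x y \<longrightarrow> x \<in> V \<and> y \<in> V)
     \<and> (\<forall>x y. E x y \<longrightarrow> E y x) \<and> (\<forall>x. \<not> E x x)"

definition degree :: "'a set \<Rightarrow> ('a \<Rightarrow> 'a \<Rightarrow> bool) \<Rightarrow> 'a \<Rightarrow> nat" where
  "degree V E x = card {y \<in> V. E x y}"

definition is_path :: "'a set \<Rightarrow> ('a \<Rightarrow> 'a \<Rightarrow> bool) \<Rightarrow> 'a list \<Rightarrow> bool" where
  "is_path V E xs \<longleftrightarrow> xs \<noteq> [] \<and> distinct xs \<and> set xs \<subseteq> V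
     \<and> (\<forall>i. Suc i < length xs \<longrightarrow> E (xs ! i) (xs ! Suc i))"

definition S_paths :: "'a set \<Rightarrow> ('a \<Rightarrow> 'a \<Rightarrow> bool) \<Rightarrow> 'a set \<Rightarrow> 'a \<Rightarrow> 'a \<Rightarrow> 'a list set" where
  "S_paths V E S u v = {xs. is_path V E xs \<and>
     ((hd xs = u \<and> last xs = v) \<or> (hd xs = v \<and> last xs = u)) \<and>
     card ({hd xs, last xs} \<inter> S) = 1 \<and>
     set (butlast (tl xs)) \<inter> S = {}}"

text \<open>dist_(G,S)(u,v) as number of edges (meaningful only when S_paths is nonempty; otherwise infinity).\<close>
definition S_dist :: "'a set \<Rightarrow> ('a \<Rightarrow> 'a \<Rightarrow> bool) \<Rightarrow> 'a set \<Rightarrow> 'a \<Rightarrow> 'a \<Rightarrow> nat" where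
  "S_dist V E S u v = Min (length ` S_paths V E S u v) - 1"

text \<open>w_(G,S)(u) = sum over v in S of (1/2)^(dist - 1), with (1/2)^infinity = 0.\<close>
definition S_weight :: "'a set \<Rightarrow> ('a \<Rightarrow> 'a \<Rightarrow> bool) \<Rightarrow> 'a set \<Rightarrow> 'a \<Rightarrow> real" where
  "S_weight V E S u = (\<Sum>v\<in>S. if S_paths V E S u v = {} then 0
       else (1/2::real) powi (int (S_dist V E S u v) - 1))"

end

theory Submission
  imports Defs
begin



lemma arith_layers:
  fixes a b :: "nat \<Rightarrow> nat"
  assumes A1: "a 1 + b 1 \<le> 3" and A2: "\<And>d. d \<ge> 1 \<Longrightarrow> a (Suc d) + b (Suc d) \<le> 2 * a d"
  shows "3/2 - ((\<Sum>d=1..Suc m. real (b d) * (1/2)^d) + real (a (Suc m)) * (1/2)^(Suc m)) \<ge> 0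
    \<and> 3/2 - ((\<Sum>d=1..Suc m. real (b d) * (1/2)^d) + real (a (Suc m)) * (1/2)^(Suc m))
       + (1/2)^(Suc m) * ((\<Sum>d=1..Suc m. real (a d + b d)) - 3 - 2 * (\<Sum>d\<in>{1..<Suc m}. real (a d))) \<ge> 0"
proof (induction m)
  case 0
  then show ?case using A1 by (simp add: field_simps)
next
  case (Suc m)
  let ?n = "Suc m"
  define G where "G = (\<Sum>d=1..?n. real (b d) * (1/2)^d)"
  define Sab where "Sab = (\<Sum>d=1..?n. real (a d + b d))"
  define Sa where "Sa = (\<Sum>d\<in>{1..<?n}. real (a d))"
  define q :: real where "q = (1/2)^?n"
  define x where "x = real (a ?n)"
  define y where "y = real (a (Suc ?n))"
  define z where "z = real (b (Suc ?n))"
  have q: "q > 0" unfolding q_def by simp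
  have a2: "y + z \<le> 2 * x"
    using A2[of ?n] unfolding x_def y_def z_def by simp
  have G: "(\<Sum>d=1..Suc ?n. real (b d) * (1/2)^d) = G + z * (q/2)"
    unfolding G_def z_def q_def by (subst sum.cl_ivl_Suc) simp
  have P1: "(\<Sum>d=1..Suc ?n. real (a d + b d)) = Sab + y + z"
    unfolding Sab_def y_def z_def by (subst sum.cl_ivl_Suc) simp
  have P2: "(\<Sum>d\<in>{1..<Suc ?n}. real (a d)) = Sa + x"
    unfolding Sa_def x_def by (subst sum.atLeastLessThan_Suc) simp_all
  have I1: "3/2 - (G + x * q) \<ge> 0" and I2: "3/2 - (G + x * q) + q * (Sab - 3 - 2 * Sa) \<ge> 0"
    using Suc.IH unfolding G_def x_def q_def Sab_def Sa_def by simp_all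
  have qs: "(1/2::real)^(Suc ?n) = q/2" by (simp add: q_def)
  have e1: "3/2 - ((G + z * (q/2)) + y * (q/2))
     = (3/2 - (G + x * q)) + (q/2) * (2 * x - y - z)"
    by (simp add: algebra_simps)
  have nn: "(q/2) * (2 * x - y - z) \<ge> 0"
    using q a2 by simp
  have e2: "3/2 - ((G + z * (q/2)) + y * (q/2)) + (q/2) * ((Sab + y + z) - 3 - 2 * (Sa + x))
      = (3/2 - (G + x * q))/2 + (3/2 - (G + x * q) + q * (Sab - 3 - 2 * Sa))/2"
    by (simp add: field_simps)
  have fin: "3/2 - ((G + z * (q/2)) + y * (q/2)) \<ge> 0 \<and> 3/2 - ((G + z * (q/2)) + y * (q/2)) + (q/2) * ((Sab + y + z) - 3 - 2 * (Sa + x)) \<ge> 0"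
  proof
    show "3/2 - ((G + z * (q/2)) + y * (q/2)) \<ge> 0"
      by (subst e1) (rule add_nonneg_nonneg[OF I1 nn])
    show "3/2 - ((G + z * (q/2)) + y * (q/2)) + (q/2) * ((Sab + y + z) - 3 - 2 * (Sa + x)) \<ge> 0"
      using I1 I2 by (subst e2) simp
  qed
  show ?case
    unfolding G P1 P2 qs y_def[symmetric] by (rule fin)
qed

lemma arith_final:
  fixes a b :: "nat \<Rightarrow> nat"
  assumes A1: "a 1 + b 1 \<le> 3" and A2: "\<And>d. d \<ge> 1 \<Longrightarrow> a (Suc d) + b (Suc d) \<le> 2 * a d"
    and z: "a (Suc m) = 0" and w: "(\<Sum>d=1..Suc m. real (b d) * (1/2)^(d-1)) \<ge> 3"
  shows "(\<Sum>d=1..Suc m. b d) \<ge> (\<Sum>d=1..Suc m. a d) + 3"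
proof -
  have h: "(\<Sum>d=1..Suc m. real (b d) * (1/2)^(d-1)) = 2 * (\<Sum>d=1..Suc m. real (b d) * (1/2)^d)"
    unfolding sum_distrib_left
  proof (rule sum.cong[OF refl])
    fix d assume "d \<in> {1..Suc m}"
    then obtain e where "d = Suc e" by (cases d) auto
    then show "real (b d) * (1/2)^(d-1) = 2 * (real (b d) * (1/2)^d)" by simp
  qed
  define P where "P = (\<Sum>d=1..Suc m. real (a d + b d)) - 3 - 2 * (\<Sum>d\<in>{1..<Suc m}. real (a d))"
  have "3/2 - ((\<Sum>d=1..Suc m. real (b d) * (1/2)^d) + real (a (Suc m)) * (1/2)^(Suc m))
       + (1/2)^(Suc m) * P \<ge> 0" using arith_layers[OF A1 A2] unfolding P_def by blast
  with z w h have "(1/2::real)^(Suc m) * P \<ge> 0" by simp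
  moreover have "(1/2::real)^(Suc m) > 0" by simp
  ultimately have "P \<ge> 0" by (meson zero_le_mult_iff not_le)
  moreover have "(\<Sum>d\<in>{1..<Suc m}. real (a d)) = (\<Sum>d=1..Suc m. real (a d))"
    using z by (subst sum.cl_ivl_Suc) (simp add: atLeastLessThanSuc_atLeastAtMost)
  ultimately have "(\<Sum>d=1..Suc m. real (b d)) \<ge> (\<Sum>d=1..Suc m. real (a d)) + 3"
    unfolding P_def by (simp add: sum.distrib)
  then show ?thesis by (simp flip: of_nat_sum)
qed



fun Rl :: "('a \<Rightarrow> 'a \<Rightarrow> bool) \<Rightarrow> 'a set \<Rightarrow> 'a \<Rightarrow> nat \<Rightarrow> 'a set" where
  "Rl E S u 0 = {u}"
| "Rl E S u (Suc n) = Rl E S u n \<union> {y. \<exists>x\<in>Rl E S u n - S. E x y}"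

locale sg =
  fixes V :: "'a set" and E :: "'a \<Rightarrow> 'a \<Rightarrow> bool" and S :: "'a set"
  assumes g: "simple_graph V E" and SV: "S \<subseteq> V" and deg: "\<forall>x\<in>V. degree V E x \<le> 3"
begin

abbreviation "R \<equiv> Rl E S"
abbreviation "K \<equiv> card V"
definition "Rf u = R u K"

lemma finV: "finite V" using g unfolding simple_graph_def by auto
lemma Ein: "E x y \<Longrightarrow> x \<in> V \<and> y \<in> V" using g unfolding simple_graph_def by auto
lemma Esym: "E x y \<Longrightarrow> E y x" using g unfolding simple_graph_def by auto

lemma R_sub: "u \<in> V \<Longrightarrow> R u n \<subseteq> V"
  by (induction n) (auto dest: Ein)

lemma R_fin: "u \<in> V \<Longrightarrow> finite (R u n)"
  using R_sub finV finite_subset by blast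

lemma R_mono: "m \<le> n \<Longrightarrow> R u m \<subseteq> R u n"
  by (rule lift_Suc_mono_le[of "R u"]) auto

lemma R_stable: assumes h: "R u (Suc m) = R u m" and mn: "m \<le> n" shows "R u n = R u m"
  using mn
proof (induction n rule: dec_induct)
  case base then show ?case by simp
next
  case (step n)
  have "R u (Suc n) = R u n \<union> {y. \<exists>x\<in>R u n - S. E x y}" by simp
  also have "\<dots> = R u (Suc m)" using step by simp
  finally show ?case using h by simp
qed

lemma R_stab_exists: assumes "u \<in> V" shows "\<exists>m \<le> K. R u (Suc m) = R u m"
proof (rule ccontr)
  assume c: "\<not> ?thesis"
  have "m \<le> Suc K \<Longrightarrow> card (R u m) \<ge> Suc m" for m
  proof (induction m)
    case 0 then show ?case by simp
  next
    case (Suc m)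
    have "R u m \<subset> R u (Suc m)" using c R_mono[of m "Suc m" u] Suc.prems by fastforce
    then have "card (R u m) < card (R u (Suc m))" using R_fin[OF assms] psubset_card_mono by blast
    then show ?case using Suc by simp
  qed
  from this[of "Suc K"] have "card (R u (Suc K)) > K" by simp
  moreover have "card (R u (Suc K)) \<le> K" using R_sub[OF assms] finV card_mono by blast
  ultimately show False by simp
qed

lemma R_K: assumes "u \<in> V" shows "R u (Suc K) = R u K" and "R u n \<subseteq> R u K"
proof -
  obtain m where m: "m \<le> K" "R u (Suc m) = R u m" using R_stab_exists[OF assms] by blast
  have e1: "R u (Suc K) = R u m" using R_stable[OF m(2), of "Suc K"] m(1) by linarith
  have e2: "R u K = R u m" using R_stable[OF m(2), of "K"] m(1) by linarith
  show "R u (Suc K) = R u K" using e1 e2 by (rule trans[OF _ sym])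
  have "R u n \<subseteq> R u (max n K)" by (rule R_mono) (rule max.cobounded1)
  also have "\<dots> = R u K" using R_stable[OF m(2), of "max n K"] m(1) e2 by (metis le_max_iff_disj)
  finally show "R u n \<subseteq> R u K" .
qed

lemma R_closed_min: assumes "u \<in> X" "\<And>x y. x \<in> X - S \<Longrightarrow> E x y \<Longrightarrow> y \<in> X" shows "R u n \<subseteq> X"
  by (induction n) (use assms in auto)

lemma Rf_closed: "u \<in> V \<Longrightarrow> x \<in> Rf u - S \<Longrightarrow> E x y \<Longrightarrow> y \<in> Rf u"
proof -
  assume a: "u \<in> V" "x \<in> Rf u - S" "E x y"
  have "y \<in> R u (Suc K)" using a(2,3) unfolding Rf_def by auto
  then show ?thesis unfolding Rf_def R_K(1)[OF a(1)] .
qed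

lemma Rf_self: "u \<in> V \<Longrightarrow> u \<in> Rf u"
  using R_K(2)[of u 0] unfolding Rf_def by auto

lemma Rf_sub: "u \<in> V \<Longrightarrow> Rf u \<subseteq> V" unfolding Rf_def by (rule R_sub)

lemma Rf_subset: "u \<in> V \<Longrightarrow> x \<in> V \<Longrightarrow> u \<in> Rf x \<Longrightarrow> Rf u \<subseteq> Rf x"
proof -
  assume a: "u \<in> V" "x \<in> V" "u \<in> Rf x"
  have "R u K \<subseteq> Rf x"
    by (rule R_closed_min[OF a(3)]) (rule Rf_closed[OF a(2)])
  then show ?thesis unfolding Rf_def[of u] .
qed

lemma R_sym: assumes "u \<in> V - S" shows "x \<in> R u n - S \<Longrightarrow> u \<in> Rf x"
proof (induction n arbitrary: x)
  case 0 then show ?case using Rf_self assms by auto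
next
  case (Suc n)
  show ?case
  proof (cases "x \<in> R u n")
    case True then show ?thesis using Suc by auto
  next
    case False
    then obtain p where p: "p \<in> R u n - S" "E p x" using Suc.prems by auto
    have xV: "x \<in> V" and pV: "p \<in> V" using Ein p(2) by auto
    have "u \<in> Rf p" using Suc.IH p(1) by blast
    moreover have "p \<in> Rf x"
      using Rf_closed[OF xV, of x p] Rf_self[OF xV] Suc.prems Esym[OF p(2)] by auto
    ultimately show ?thesis using Rf_subset[OF pV xV] by auto
  qed
qed

lemma Rf_eq: assumes "u \<in> V - S" "x \<in> Rf u - S" shows "Rf x = Rf u"
proof
  have xV: "x \<in> V" using assms Rf_sub by auto
  show "Rf x \<subseteq> Rf u" using Rf_subset[OF xV] assms by auto
  have "u \<in> Rf x" using R_sym[OF assms(1)] assms(2) unfolding Rf_def[of u] by blast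
  then show "Rf u \<subseteq> Rf x" using Rf_subset[OF _ xV] assms by auto
qed

lemma R_parent: "y \<in> R x n \<Longrightarrow> y \<noteq> x \<Longrightarrow> \<exists>p\<in>R x n - S. E p y"
proof (induction n)
  case 0 then show ?case by simp
next
  case (Suc n)
  then show ?case using R_mono[of n "Suc n" x] by auto
qed

definition L :: "'a \<Rightarrow> nat \<Rightarrow> 'a set" where
  "L u d = (case d of 0 \<Rightarrow> R u 0 | Suc d' \<Rightarrow> R u (Suc d') - R u d')"
definition "la u d = card (L u d - S)"
definition "lb u d = card (L u d \<inter> S)"

lemma L0: "L u 0 = {u}" by (simp add: L_def)
lemma LSuc: "L u (Suc d) = R u (Suc d) - R u d" by (simp add: L_def)

lemma R_split: "R u (Suc n) = R u n \<union> L u (Suc n)" "R u n \<inter> L u (Suc n) = {}"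
  using R_mono[of n "Suc n" u] by (auto simp: LSuc)

lemma L_sub_R: "L u d \<subseteq> R u d"
  by (cases d) (auto simp: L_def)

lemma L_fin: "u \<in> V \<Longrightarrow> finite (L u d)"
  using finite_subset[OF L_sub_R R_fin] by blast

lemma L_sub: "u \<in> V \<Longrightarrow> L u d \<subseteq> V"
  using R_sub[of u d] by (cases d) (auto simp: L_def)

lemma count_S: assumes "u \<in> V - S" shows "card (R u n \<inter> S) = (\<Sum>d=1..n. lb u d)"
proof (induction n)
  case 0 then show ?case using assms by simp
next
  case (Suc n)
  have "R u (Suc n) \<inter> S = (R u n \<inter> S) \<union> (L u (Suc n) \<inter> S)" using R_split(1) by auto
  moreover have "card ((R u n \<inter> S) \<union> (L u (Suc n) \<inter> S)) = card (R u n \<inter> S) + card (L u (Suc n) \<inter> S)"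
    by (rule card_Un_disjoint) (use R_split(2) R_fin[of u n] L_fin[of u "Suc n"] assms in auto)
  ultimately show ?case using Suc by (simp add: lb_def)
qed

lemma count_W: assumes "u \<in> V - S" shows "card (R u n - S) = 1 + (\<Sum>d=1..n. la u d)"
proof (induction n)
  case 0 then show ?case using assms by (simp add: insert_Diff_if)
next
  case (Suc n)
  have "R u (Suc n) - S = (R u n - S) \<union> (L u (Suc n) - S)" using R_split(1) by auto
  moreover have "card ((R u n - S) \<union> (L u (Suc n) - S)) = card (R u n - S) + card (L u (Suc n) - S)"
    by (rule card_Un_disjoint) (use R_split(2) R_fin[of u n] L_fin[of u "Suc n"] assms in auto)
  ultimately show ?case using Suc by (simp add: la_def)
qed

lemma L_cover: assumes "y \<in> L u (Suc d)" shows "\<exists>x\<in>L u d - S. E x y"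
proof -
  from assms obtain x where x: "x \<in> R u d - S" "E x y" "y \<notin> R u d" by (auto simp: LSuc)
  show ?thesis
  proof (cases d)
    case 0 then show ?thesis using x by (auto simp: L_def)
  next
    case (Suc d')
    have "x \<notin> R u d'" using x Suc by auto
    then show ?thesis using x Suc by (auto simp: LSuc)
  qed
qed

lemma card_L: "u \<in> V \<Longrightarrow> la u d + lb u d = card (L u d)"
proof -
  assume "u \<in> V"
  then have f: "finite (L u d)" by (rule L_fin)
  have "card (L u d) = card ((L u d - S) \<union> (L u d \<inter> S))" by (metis Un_Diff_Int)
  also have "\<dots> = card (L u d - S) + card (L u d \<inter> S)"
    by (rule card_Un_disjoint) (use f in auto)
  finally show ?thesis unfolding la_def lb_def by simp
qed

lemma nbr_card: "x \<in> V \<Longrightarrow> card {y \<in> V. E x y} \<le> 3"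
  using deg unfolding degree_def by auto

lemma layer_bound: assumes u: "u \<in> V - S"
  shows "la u (Suc d) + lb u (Suc d) \<le> (if d = 0 then 3 else 2 * la u d)"
proof -
  have uV: "u \<in> V" using u by auto
  have cov: "L u (Suc d) \<subseteq> (\<Union>x\<in>L u d - S. {y \<in> L u (Suc d). E x y})"
    using L_cover by blast
  show ?thesis
  proof (cases d)
    case 0
    have "L u (Suc d) \<subseteq> {y \<in> V. E u y}" using cov 0 L0 Ein by auto
    then have "card (L u (Suc d)) \<le> card {y \<in> V. E u y}" using finV by (intro card_mono) auto
    then show ?thesis using nbr_card[OF uV] card_L[OF uV] 0 by simp
  next
    case (Suc d')
    have each: "card {y \<in> L u (Suc d). E x y} \<le> 2" if x: "x \<in> L u d - S" for x
    proof -
      have xV: "x \<in> V" using x L_sub[OF uV] by auto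
      obtain p where p: "p \<in> L u d' - S" "E p x" using L_cover[of x u d'] x Suc by auto
      have pR: "p \<in> R u d" using p(1) Suc by (cases d') (auto simp: L_def)
      have pV: "p \<in> V" using Ein p(2) by auto
      have "{y \<in> L u (Suc d). E x y} \<subseteq> {y \<in> V. E x y} - {p}"
        using pR L_sub[OF uV, of "Suc d"] by (auto simp: LSuc)
      then have "card {y \<in> L u (Suc d). E x y} \<le> card ({y \<in> V. E x y} - {p})"
        using finV by (intro card_mono) auto
      also have "\<dots> = card {y \<in> V. E x y} - 1"
        using pV Esym[OF p(2)] by (subst card_Diff_singleton) auto
      finally show ?thesis using nbr_card[OF xV] by linarith
    qed
    have "card (L u (Suc d)) \<le> card (\<Union>x\<in>L u d - S. {y \<in> L u (Suc d). E x y})"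
      using cov L_fin[OF uV] by (intro card_mono) auto
    also have "\<dots> \<le> (\<Sum>x\<in>L u d - S. card {y \<in> L u (Suc d). E x y})"
      using L_fin[OF uV] by (intro card_UN_le) auto
    also have "\<dots> \<le> (\<Sum>x\<in>L u d - S. 2)" by (rule sum_mono) (rule each)
    also have "\<dots> = 2 * la u d" by (simp add: la_def)
    finally show ?thesis using card_L[OF uV] Suc by simp
  qed
qed

end



lemma tl_rev': "tl (rev xs) = rev (butlast xs)"
  using butlast_rev[of "rev xs"] by simp

lemma set_bt_rev: "set (butlast (tl (rev xs))) = set (butlast (tl xs))"
  by (simp add: tl_rev' butlast_tl)

lemma path_rev: assumes "is_path V E xs" "\<And>x y. E x y \<Longrightarrow> E y x" shows "is_path V E (rev xs)"
  unfolding is_path_def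
proof (intro conjI allI impI)
  show "rev xs \<noteq> []" "distinct (rev xs)" "set (rev xs) \<subseteq> V" using assms(1) unfolding is_path_def by auto
  fix i assume i: "Suc i < length (rev xs)"
  let ?l = "length xs"
  have e: "E (xs ! (?l - Suc (Suc i))) (xs ! Suc (?l - Suc (Suc i)))"
    using assms(1) i unfolding is_path_def by auto
  have "Suc (?l - Suc (Suc i)) = ?l - Suc i" using i by simp
  then have "E (xs ! (?l - Suc i)) (xs ! (?l - Suc (Suc i)))" using e assms(2) by metis
  then show "E (rev xs ! i) (rev xs ! Suc i)" using i by (simp add: rev_nth)
qed

lemma path_R: assumes "is_path V E ys" "hd ys = u" "\<forall>i. Suc i < length ys \<longrightarrow> ys ! i \<notin> S"
  shows "i < length ys \<Longrightarrow> ys ! i \<in> Rl E S u i"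
proof (induction i)
  case 0 then show ?case using assms(1,2) unfolding is_path_def by (simp add: hd_conv_nth)
next
  case (Suc i)
  have "ys ! i \<in> Rl E S u i" using Suc by simp
  moreover have "ys ! i \<notin> S" using assms(3) Suc.prems by blast
  moreover have "E (ys ! i) (ys ! Suc i)" using assms(1) Suc.prems unfolding is_path_def by blast
  ultimately show ?case by auto
qed

lemma path_noS: assumes "ys \<noteq> []" "hd ys \<notin> S" "set (butlast (tl ys)) \<inter> S = {}"
  shows "Suc i < length ys \<Longrightarrow> ys ! i \<notin> S"
proof (cases i)
  case 0 then show "ys ! i \<notin> S" using assms by (simp add: hd_conv_nth)
next
  case (Suc j)
  assume l: "Suc i < length ys"
  have "ys ! i = butlast (tl ys) ! j" using l Suc by (simp add: nth_butlast nth_tl)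
  moreover have "j < length (butlast (tl ys))" using l Suc by simp
  ultimately have "ys ! i \<in> set (butlast (tl ys))" by simp
  then show ?thesis using assms(3) by blast
qed

context sg begin

lemma path_to: assumes u: "u \<in> V - S" and v: "v \<in> S" and xs: "xs \<in> S_paths V E S u v"
  shows "v \<in> R u (length xs - 1) \<and> length xs \<ge> 2"
proof -
  have p: "is_path V E xs" and bt: "set (butlast (tl xs)) \<inter> S = {}"
    and ends: "(hd xs = u \<and> last xs = v) \<or> (hd xs = v \<and> last xs = u)"
    using xs unfolding S_paths_def by auto
  obtain ys where ys: "is_path V E ys" "hd ys = u" "last ys = v" "set (butlast (tl ys)) \<inter> S = {}"
    "length ys = length xs"
  proof (cases "hd xs = u \<and> last xs = v")
    case True then show ?thesis using that p bt by blast
  next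
    case False
    then have "hd xs = v" "last xs = u" using ends by auto
    moreover have "xs \<noteq> []" using p unfolding is_path_def by auto
    ultimately show ?thesis using that[of "rev xs"] path_rev[OF p Esym] bt set_bt_rev[of xs]
      by (simp add: hd_rev last_rev)
  qed
  have ne: "ys \<noteq> []" using ys(1) unfolding is_path_def by auto
  have noS: "\<forall>i. Suc i < length ys \<longrightarrow> ys ! i \<notin> S"
    using path_noS[OF ne _ ys(4)] ys(2) u by auto
  have l1: "length ys - 1 < length ys" using ne by simp
  have "ys ! (length ys - 1) = v" using ys(3) ne by (simp add: last_conv_nth)
  then have "v \<in> R u (length ys - 1)" using path_R[OF ys(1) ys(2) noS l1] by simp
  moreover have "length ys \<ge> 2"
  proof (rule ccontr)
    assume "\<not> length ys \<ge> 2"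
    moreover have "length ys \<noteq> 0" using ne by simp
    ultimately have "length ys = 1" by linarith
    then have "hd ys = last ys" by (cases ys) auto
    then show False using ys u v by auto
  qed
  ultimately show ?thesis using ys(5) by simp
qed

lemma S_paths_fin: "finite (S_paths V E S u v)"
proof -
  have "S_paths V E S u v \<subseteq> {xs. set xs \<subseteq> V \<and> length xs \<le> card V}"
  proof
    fix xs assume "xs \<in> S_paths V E S u v"
    then have "is_path V E xs" unfolding S_paths_def by auto
    then have "set xs \<subseteq> V" "distinct xs" unfolding is_path_def by auto
    moreover have "length xs \<le> card V"
      using card_mono[OF finV \<open>set xs \<subseteq> V\<close>] distinct_card[OF \<open>distinct xs\<close>] by simp
    ultimately show "xs \<in> {xs. set xs \<subseteq> V \<and> length xs \<le> card V}" by simp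
  qed
  then show ?thesis using finite_lists_length_le[OF finV] finite_subset by blast
qed

end



context sg begin

definition "dl u v = (LEAST d. v \<in> R u d)"

lemma dl_L: assumes "v \<in> L u (Suc n)" shows "dl u v = Suc n"
  unfolding dl_def
proof (rule Least_equality)
  show "v \<in> R u (Suc n)" using assms LSuc by blast
  fix j assume j: "v \<in> R u j"
  show "Suc n \<le> j"
  proof (rule ccontr)
    assume "\<not> Suc n \<le> j"
    then have "R u j \<subseteq> R u n" by (intro R_mono) simp
    then show False using j assms by (auto simp: LSuc)
  qed
qed

lemma hsum: assumes u: "u \<in> V - S"
  shows "(\<Sum>v\<in>R u n \<inter> S. (1/2::real)^(dl u v - 1)) = (\<Sum>d=1..n. real (lb u d) * (1/2)^(d-1))"
proof (induction n)
  case 0 then show ?case using u by simp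
next
  case (Suc n)
  have uV: "u \<in> V" using u by simp
  have "R u (Suc n) \<inter> S = (R u n \<inter> S) \<union> (L u (Suc n) \<inter> S)" using R_split(1) by auto
  then have "(\<Sum>v\<in>R u (Suc n) \<inter> S. (1/2::real)^(dl u v - 1))
      = (\<Sum>v\<in>R u n \<inter> S. (1/2::real)^(dl u v - 1)) + (\<Sum>v\<in>L u (Suc n) \<inter> S. (1/2::real)^(dl u v - 1))"
    using R_split(2) R_fin[OF uV, of n] L_fin[OF uV, of "Suc n"]
    by (simp add: sum.union_disjoint Int_assoc disjoint_iff)
  also have "(\<Sum>v\<in>L u (Suc n) \<inter> S. (1/2::real)^(dl u v - 1)) = (\<Sum>v\<in>L u (Suc n) \<inter> S. (1/2::real)^n)"
    by (rule sum.cong) (auto simp: dl_L)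
  also have "\<dots> = real (lb u (Suc n)) * (1/2)^(Suc n - 1)" by (simp add: lb_def)
  finally show ?case using Suc.IH by simp
qed

lemma pointwise: assumes u: "u \<in> V - S" and v: "v \<in> S"
  shows "(if S_paths V E S u v = {} then 0 else (1/2::real) powi (int (S_dist V E S u v) - 1))
    \<le> (if v \<in> R u (Suc K) then (1/2::real)^(dl u v - 1) else 0)"
proof (cases "S_paths V E S u v = {}")
  case True then show ?thesis by simp
next
  case False
  have uV: "u \<in> V" using u by simp
  have "Min (length ` S_paths V E S u v) \<in> length ` S_paths V E S u v"
    using False S_paths_fin by (intro Min_in) auto
  then obtain xs where xs: "xs \<in> S_paths V E S u v" "length xs = Min (length ` S_paths V E S u v)" by auto
  have dist: "S_dist V E S u v = length xs - 1" unfolding S_dist_def xs(2) ..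
  have pt: "v \<in> R u (length xs - 1)" "length xs \<ge> 2" using path_to[OF u v xs(1)] by auto
  have inR: "v \<in> R u (Suc K)" using pt(1) R_K[OF uV] by auto
  have dle: "dl u v \<le> length xs - 1" unfolding dl_def using pt(1) by (rule Least_le)
  have "int (S_dist V E S u v) - 1 = int (length xs - 2)" using dist pt(2) by simp
  then have "(1/2::real) powi (int (S_dist V E S u v) - 1) = (1/2)^(length xs - 2)" by simp
  also have "\<dots> \<le> (1/2)^(dl u v - 1)" by (rule power_decreasing) (use dle in auto)
  finally show ?thesis using False inR by simp
qed

lemma weight_bound: assumes u: "u \<in> V - S"
  shows "S_weight V E S u \<le> (\<Sum>d=1..Suc K. real (lb u d) * (1/2)^(d-1))"
proof -
  have finS: "finite S" using SV finV finite_subset by blast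
  have "S_weight V E S u \<le> (\<Sum>v\<in>S. if v \<in> R u (Suc K) then (1/2::real)^(dl u v - 1) else 0)"
    unfolding S_weight_def by (rule sum_mono) (rule pointwise[OF u])
  also have "\<dots> = (\<Sum>v\<in>{v\<in>S. v \<in> R u (Suc K)}. (1/2::real)^(dl u v - 1))"
    by (rule sum.inter_filter[symmetric, OF finS])
  also have "{v\<in>S. v \<in> R u (Suc K)} = R u (Suc K) \<inter> S" by auto
  also have "(\<Sum>v\<in>R u (Suc K) \<inter> S. (1/2::real)^(dl u v - 1)) = (\<Sum>d=1..Suc K. real (lb u d) * (1/2)^(d-1))"
    by (rule hsum[OF u])
  finally show ?thesis .
qed

lemma comp_bound: assumes u: "u \<in> V - S" and w: "S_weight V E S u \<ge> 3"
  shows "card (Rf u \<inter> S) \<ge> card (Rf u - S) + 2"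
proof -
  have uV: "u \<in> V" using u by simp
  have A1: "la u 1 + lb u 1 \<le> 3" using layer_bound[OF u, of 0] by simp
  have A2: "la u (Suc d) + lb u (Suc d) \<le> 2 * la u d" if "d \<ge> 1" for d
    using layer_bound[OF u, of d] that by simp
  have z: "la u (Suc K) = 0" unfolding la_def LSuc R_K(1)[OF uV] by simp
  have ws: "(\<Sum>d=1..Suc K. real (lb u d) * (1/2)^(d-1)) \<ge> 3" using weight_bound[OF u] w by linarith
  have "(\<Sum>d=1..Suc K. lb u d) \<ge> (\<Sum>d=1..Suc K. la u d) + 3"
    by (rule arith_final[OF A1 A2 z ws])
  moreover have "card (R u (Suc K) \<inter> S) = (\<Sum>d=1..Suc K. lb u d)" by (rule count_S[OF u])
  moreover have "card (R u (Suc K) - S) = 1 + (\<Sum>d=1..Suc K. la u d)" by (rule count_W[OF u])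
  ultimately show ?thesis unfolding Rf_def R_K(1)[OF uV, symmetric] by simp
qed

end



context sg begin

lemma comps_same: assumes "x \<in> V - S" "y \<in> V - S" "z \<in> Rf x - S" "z \<in> Rf y - S"
  shows "Rf x = Rf y"
  using Rf_eq[OF assms(1,3)] Rf_eq[OF assms(2,4)] by simp

lemma touch_bound: assumes s: "s \<in> S"
  shows "card {X \<in> Rf ` (V - S). s \<in> X} \<le> 3"
proof -
  let ?A = "{X \<in> Rf ` (V - S). s \<in> X}"
  have sV: "s \<in> V" using s SV by auto
  define nb where "nb X = (SOME p. p \<in> X - S \<and> E s p)" for X
  have ex: "\<exists>p. p \<in> X - S \<and> E s p" if X: "X \<in> ?A" for X
  proof -
    obtain x where x: "x \<in> V - S" "X = Rf x" "s \<in> X" using X by auto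
    have "s \<noteq> x" using x s by auto
    then obtain p where "p \<in> R x K - S" "E p s" using R_parent[of s x K] x unfolding Rf_def by auto
    then show ?thesis using x Esym unfolding Rf_def by blast
  qed
  have nbp: "nb X \<in> X - S \<and> E s (nb X)" if "X \<in> ?A" for X
    unfolding nb_def using someI_ex[OF ex[OF that]] .
  have "inj_on nb ?A"
  proof (rule inj_onI)
    fix X Y assume X: "X \<in> ?A" and Y: "Y \<in> ?A" and eq: "nb X = nb Y"
    obtain x where x: "x \<in> V - S" "X = Rf x" using X by auto
    obtain y where y: "y \<in> V - S" "Y = Rf y" using Y by auto
    show "X = Y" using comps_same[OF x(1) y(1), of "nb X"] nbp[OF X] nbp[OF Y] eq x y by auto
  qed
  moreover have "nb ` ?A \<subseteq> {y \<in> V. E s y}" using nbp Ein by blast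
  ultimately have "card ?A \<le> card {y \<in> V. E s y}" using finV by (intro card_inj_on_le) auto
  then show ?thesis using nbr_card[OF sV] by linarith
qed

lemma main_count:
  assumes w: "\<forall>u\<in>V - S. S_weight V E S u \<ge> 3"
  shows "card S * min 3 (card (Rf ` (V - S))) \<ge> card (V - S) + 2 * card (Rf ` (V - S))"
proof -
  let ?W = "V - S"
  let ?C = "Rf ` ?W"
  have finS: "finite S" using SV finV finite_subset by blast
  have finC: "finite ?C" using finV by simp
  have finX: "finite X" if "X \<in> ?C" for X using that Rf_sub finV finite_subset by blast
  have Wun: "?W = (\<Union>X\<in>?C. X - S)"
  proof
    show "?W \<subseteq> (\<Union>X\<in>?C. X - S)" using Rf_self by blast
    show "(\<Union>X\<in>?C. X - S) \<subseteq> ?W" using Rf_sub by blast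
  qed
  have cardU: "card (\<Union>X\<in>?C. X - S) = (\<Sum>X\<in>?C. card (X - S))"
  proof (rule card_UN_disjoint[OF finC])
    show "\<forall>X\<in>?C. finite (X - S)" using finX by blast
    show "\<forall>X\<in>?C. \<forall>Y\<in>?C. X \<noteq> Y \<longrightarrow> (X - S) \<inter> (Y - S) = {}"
      using comps_same by blast
  qed
  have cardW: "card ?W = (\<Sum>X\<in>?C. card (X - S))"
    using cardU by (simp only: Wun[symmetric])
  have c1: "card (X \<inter> S) = (\<Sum>s\<in>S. if s \<in> X then 1 else 0)" for X
  proof -
    have "(\<Sum>s\<in>S. if s \<in> X then 1 else 0) = (\<Sum>s\<in>{s\<in>S. s \<in> X}. (1::nat))"
      by (rule sum.inter_filter[symmetric, OF finS])
    also have "{s\<in>S. s \<in> X} = X \<inter> S" by auto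
    finally show ?thesis by simp
  qed
  have c2: "card {X \<in> ?C. s \<in> X} = (\<Sum>X\<in>?C. if s \<in> X then 1 else 0)" for s
    using sum.inter_filter[OF finC, of "\<lambda>_. (1::nat)" "\<lambda>X. s \<in> X"] by simp
  have "(\<Sum>X\<in>?C. card (X \<inter> S)) = (\<Sum>s\<in>S. card {X \<in> ?C. s \<in> X})"
    unfolding c1 c2 by (rule sum.swap)
  also have "\<dots> \<le> card S * min 3 (card ?C)"
  proof (rule sum_bounded_above[of S _ "min 3 (card ?C)", simplified])
    fix s assume "s \<in> S"
    then show "card {X \<in> ?C. s \<in> X} \<le> 3 \<and> card {X \<in> ?C. s \<in> X} \<le> card ?C"
      using touch_bound[of s] card_mono[OF finC, of "{X \<in> ?C. s \<in> X}"] by auto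
  qed
  finally have up: "(\<Sum>X\<in>?C. card (X \<inter> S)) \<le> card S * min 3 (card ?C)" .
  have "(\<Sum>X\<in>?C. card (X - S) + 2) \<le> (\<Sum>X\<in>?C. card (X \<inter> S))"
  proof (rule sum_mono)
    fix X assume "X \<in> ?C"
    then obtain x where "x \<in> ?W" "X = Rf x" by auto
    then show "card (X - S) + 2 \<le> card (X \<inter> S)" using comp_bound w by auto
  qed
  moreover have "(\<Sum>X\<in>?C. card (X - S) + 2) = card ?W + 2 * card ?C"
    unfolding sum.distrib cardW by simp
  ultimately show ?thesis using up by linarith
qed

end

theorem theorem7:
  fixes V :: "'a set" and E :: "'a \<Rightarrow> 'a \<Rightarrow> bool" and S :: "'a set"
  assumes "simple_graph V E"
    and "card V \<ge> 3"
    and "\<forall>x\<in>V. degree V E x \<le> 3"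
    and "S \<subseteq> V"
    and "\<forall>u\<in>V - S. S_weight V E S u \<ge> 3"
  shows "real (card S) \<ge> (real (card V) + 6) / 4"
proof -
  interpret sg V E S using assms(1,3,4) by unfold_locales
  let ?m = "card (Rf ` (V - S))"
  have finS: "finite S" using assms(4) finV finite_subset by blast
  have mc: "card S * min 3 ?m \<ge> card (V - S) + 2 * ?m" by (rule main_count[OF assms(5)])
  have cW: "card (V - S) = card V - card S" using card_Diff_subset[OF finS assms(4)] .
  have sle: "card S \<le> card V" using card_mono[OF finV assms(4)] .
  have "4 * card S \<ge> card V + 6"
  proof (cases "?m = 0")
    case True
    then have "V - S = {}" using finV by simp
    then have "V \<subseteq> S" by auto
    then have "card V \<le> card S" using card_mono[OF finS] by blast
    then show ?thesis using assms(2) by linarith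
  next
    case False
    then consider "?m = 1" | "?m = 2" | "?m \<ge> 3" by linarith
    then show ?thesis
    proof cases
      case 1 then show ?thesis using mc cW sle assms(2) by simp
    next
      case 2 then show ?thesis using mc cW sle assms(2) by simp
    next
      case 3 then have "min 3 ?m = 3" by simp
      then show ?thesis using mc cW sle 3 assms(2) by simp
    qed
  qed
  then show ?thesis by simp
qed


end
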